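(* Let $F_X,F_Y$ be univariate distributions. The set $\mathfrak{Q}^{F_X,F_Y}$ of bivariate quasi-distributions with margins $F_X,F_Y$ is closed under pointwise infima and suprema (of nonempty subsets). In particular, for every nonempty set $\mathcal{G}$ of bivariate distributions all having margins $F_X$ and $F_Y$, the pointwise infimum $\inf_{F\in\mathcal{G}}F$ and supremum $\sup_{F\in\mathcal{G}}F$ are quasi-distributions (with margins $F_X,F_Y$).
   Context: $\overline{\mathbb{R}}=\mathbb{R}\cup\{-\infty,\infty\}$. A univariate distribution is a nondecreasing $G:\overline{\mathbb{R}}\to[0,1]$ with $G(-\infty)=0$, $G(\infty)=1$ (not necessarily right continuous). The volume of $[x_1,x_2]\times[y_1,y_2]$ w.r.t. $F$ is $F(x_1,y_1)+F(x_2,y_2)-F(x_2,y_1)-F(x_1,y_2)$. A bivariate quasi-distribution is $F:\overline{\mathbb{R}}^2\to[0,1]$ with $F(x,-\infty)=F(-\infty,y)=0$, $F(\infty,\infty)=1$, and nonnegative volume for every rectangle with corners in $\overline{\mathbb{R}}^2$ intersecting the boundary (points having a coordinate $\pm\infty$); a bivariate distribution additionally has nonnegative volume for every rectangle. Margins are $F(\cdot,\infty)$ and $F(\infty,\cdot)$. *)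

theory Defs
  imports "HOL-Library.Extended_Real"
begin

text \<open>Univariate distribution on the extended reals (not necessarily right continuous).\<close>
definition univ_dist :: "(ereal \<Rightarrow> real) \<Rightarrow> bool" where
  "univ_dist G \<longleftrightarrow> mono G \<and> G (-\<infinity>) = 0 \<and> G \<infinity> = 1"

definition volume2 :: "(ereal \<Rightarrow> ereal \<Rightarrow> real) \<Rightarrow> ereal \<Rightarrow> ereal \<Rightarrow> ereal \<Rightarrow> ereal \<Rightarrow> real" where
  "volume2 F x1 x2 y1 y2 = F x1 y1 + F x2 y2 - F x2 y1 - F x1 y2"

definition meets_boundary :: "ereal \<Rightarrow> ereal \<Rightarrow> ereal \<Rightarrow> ereal \<Rightarrow> bool" where
  "meets_boundary x1 x2 y1 y2 \<longleftrightarrow> x1 = -\<infinity> \<or> x2 = \<infinity> \<or> y1 = -\<infinity> \<or> y2 = \<infinity>"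

definition biv_quasi_dist :: "(ereal \<Rightarrow> ereal \<Rightarrow> real) \<Rightarrow> bool" where
  "biv_quasi_dist F \<longleftrightarrow>
     (\<forall>x y. 0 \<le> F x y \<and> F x y \<le> 1) \<and>
     (\<forall>x. F x (-\<infinity>) = 0) \<and> (\<forall>y. F (-\<infinity>) y = 0) \<and> F \<infinity> \<infinity> = 1 \<and>
     (\<forall>x1 x2 y1 y2. x1 \<le> x2 \<and> y1 \<le> y2 \<and> meets_boundary x1 x2 y1 y2
        \<longrightarrow> volume2 F x1 x2 y1 y2 \<ge> 0)"

definition biv_dist :: "(ereal \<Rightarrow> ereal \<Rightarrow> real) \<Rightarrow> bool" where
  "biv_dist F \<longleftrightarrow> biv_quasi_dist F \<and>
     (\<forall>x1 x2 y1 y2. x1 \<le> x2 \<and> y1 \<le> y2 \<longrightarrow> volume2 F x1 x2 y1 y2 \<ge> 0)"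

definition has_margins :: "(ereal \<Rightarrow> ereal \<Rightarrow> real) \<Rightarrow> (ereal \<Rightarrow> real) \<Rightarrow> (ereal \<Rightarrow> real) \<Rightarrow> bool" where
  "has_margins F FX FY \<longleftrightarrow> (\<forall>x. F x \<infinity> = FX x) \<and> (\<forall>y. F \<infinity> y = FY y)"

definition quasi_dists_with_margins :: "(ereal \<Rightarrow> real) \<Rightarrow> (ereal \<Rightarrow> real) \<Rightarrow> (ereal \<Rightarrow> ereal \<Rightarrow> real) set" where
  "quasi_dists_with_margins FX FY = {F. biv_quasi_dist F \<and> has_margins F FX FY}"

end

theory Submission
  imports Defs
begin

lemma inf_closed:
  assumes ne: "G \<noteq> {}" and sub: "G \<subseteq> quasi_dists_with_margins FX FY"
  shows "(\<lambda>x y. INF F\<in>G. F x y) \<in> quasi_dists_with_margins FX FY"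
proof -
  have Q: "\<And>F. F \<in> G \<Longrightarrow> biv_quasi_dist F \<and> has_margins F FX FY"
    using sub unfolding quasi_dists_with_margins_def by blast
  have bd: "\<And>x y. bdd_below ((\<lambda>F. F x y) ` G)"
    by (rule bdd_belowI[where m=0]) (use Q in \<open>auto simp: biv_quasi_dist_def\<close>)
  have lo: "\<And>F x y. F \<in> G \<Longrightarrow> (INF F\<in>G. F x y) \<le> F x y"
    by (rule cINF_lower[OF bd])
  have gr: "\<And>m x y. (\<And>F. F \<in> G \<Longrightarrow> m \<le> F x y) \<Longrightarrow> m \<le> (INF F\<in>G. F x y)"
    by (rule cINF_greatest[OF ne]) auto
  have const: "\<And>x y c. (\<And>F. F \<in> G \<Longrightarrow> F x y = c) \<Longrightarrow> (INF F\<in>G. F x y) = c"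
  proof -
    fix x y c assume h: "\<And>F. F \<in> G \<Longrightarrow> F x y = (c::real)"
    from ne obtain F0 where "F0 \<in> G" by blast
    show "(INF F\<in>G. F x y) = c"
      using lo[OF \<open>F0 \<in> G\<close>, of x y] h[OF \<open>F0 \<in> G\<close>] gr[of c x y] h by force
  qed
  let ?G = "\<lambda>x y. INF F\<in>G. F x y"
  have mx: "\<And>x. ?G x \<infinity> = FX x" using const Q by (auto simp: has_margins_def)
  have my: "\<And>y. ?G \<infinity> y = FY y" using const Q by (auto simp: has_margins_def)
  have z1: "\<And>x. ?G x (-\<infinity>) = 0" using const Q by (auto simp: biv_quasi_dist_def)
  have z2: "\<And>y. ?G (-\<infinity>) y = 0" using const Q by (auto simp: biv_quasi_dist_def)
  have one: "?G \<infinity> \<infinity> = 1" using const Q by (auto simp: biv_quasi_dist_def)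
  have b0: "\<And>x y. 0 \<le> ?G x y" using gr Q by (auto simp: biv_quasi_dist_def)
  have b1: "\<And>x y. ?G x y \<le> 1"
  proof -
    fix x y
    from ne obtain F0 where "F0 \<in> G" by blast
    have b: "F0 x y \<le> 1" using Q[OF \<open>F0 \<in> G\<close>] by (simp add: biv_quasi_dist_def)
    show "?G x y \<le> 1" by (rule order_trans[OF lo[OF \<open>F0 \<in> G\<close>] b])
  qed
  have vol: "\<And>F x1 x2 y1 y2. F \<in> G \<Longrightarrow> x1 \<le> x2 \<Longrightarrow> y1 \<le> y2 \<Longrightarrow> meets_boundary x1 x2 y1 y2
     \<Longrightarrow> volume2 F x1 x2 y1 y2 \<ge> 0"
    using Q by (auto simp: biv_quasi_dist_def)
  have V: "volume2 ?G x1 x2 y1 y2 \<ge> 0" if h: "x1 \<le> x2" "y1 \<le> y2" "meets_boundary x1 x2 y1 y2"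
    for x1 x2 y1 y2
  proof -
    consider "x1 = -\<infinity>" | "x2 = \<infinity>" | "y1 = -\<infinity>" | "y2 = \<infinity>"
      using h(3) unfolding meets_boundary_def by blast
    then show ?thesis
    proof cases
      case 1
      have "\<And>F. F \<in> G \<Longrightarrow> F x2 y1 \<le> F x2 y2"
      proof -
        fix F assume "F \<in> G"
        from vol[OF this h] Q[OF this] 1 show "F x2 y1 \<le> F x2 y2"
          by (simp add: volume2_def biv_quasi_dist_def)
      qed
      note hF = this
      have "?G x2 y1 \<le> ?G x2 y2"
      proof (rule gr)
        fix F assume FG: "F \<in> G"
        show "?G x2 y1 \<le> F x2 y2" by (rule order_trans[OF lo[OF FG] hF[OF FG]])
      qed
      then show ?thesis using 1 z2 by (simp add: volume2_def)
    next
      case 3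
      have "\<And>F. F \<in> G \<Longrightarrow> F x1 y2 \<le> F x2 y2"
      proof -
        fix F assume "F \<in> G"
        from vol[OF this h] Q[OF this] 3 show "F x1 y2 \<le> F x2 y2"
          by (simp add: volume2_def biv_quasi_dist_def)
      qed
      note hF = this
      have "?G x1 y2 \<le> ?G x2 y2"
      proof (rule gr)
        fix F assume FG: "F \<in> G"
        show "?G x1 y2 \<le> F x2 y2" by (rule order_trans[OF lo[OF FG] hF[OF FG]])
      qed
      then show ?thesis using 3 z1 by (simp add: volume2_def)
    next
      case 2
      have "\<And>F. F \<in> G \<Longrightarrow> F x1 y2 - (FY y2 - FY y1) \<le> F x1 y1"
      proof -
        fix F assume "F \<in> G"
        from vol[OF this h] Q[OF this] 2 show "F x1 y2 - (FY y2 - FY y1) \<le> F x1 y1"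
          by (simp add: volume2_def has_margins_def)
      qed
      note hF = this
      have "?G x1 y2 - (FY y2 - FY y1) \<le> ?G x1 y1"
      proof (rule gr)
        fix F assume "F \<in> G"
        then show "?G x1 y2 - (FY y2 - FY y1) \<le> F x1 y1" using lo[OF \<open>F \<in> G\<close>, of x1 y2] hF[OF \<open>F \<in> G\<close>] by linarith
      qed
      then show ?thesis using 2 my by (simp add: volume2_def)
    next
      case 4
      have "\<And>F. F \<in> G \<Longrightarrow> F x2 y1 - (FX x2 - FX x1) \<le> F x1 y1"
      proof -
        fix F assume "F \<in> G"
        from vol[OF this h] Q[OF this] 4 show "F x2 y1 - (FX x2 - FX x1) \<le> F x1 y1"
          by (simp add: volume2_def has_margins_def)
      qed
      note hF = this
      have "?G x2 y1 - (FX x2 - FX x1) \<le> ?G x1 y1"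
      proof (rule gr)
        fix F assume "F \<in> G"
        then show "?G x2 y1 - (FX x2 - FX x1) \<le> F x1 y1" using lo[OF \<open>F \<in> G\<close>, of x2 y1] hF[OF \<open>F \<in> G\<close>] by linarith
      qed
      then show ?thesis using 4 mx by (simp add: volume2_def)
    qed
  qed
  show ?thesis
    unfolding quasi_dists_with_margins_def biv_quasi_dist_def has_margins_def
    using b0 b1 z1 z2 one mx my V one[unfolded my] by auto
qed

lemma sup_closed:
  assumes ne: "G \<noteq> {}" and sub: "G \<subseteq> quasi_dists_with_margins FX FY"
  shows "(\<lambda>x y. SUP F\<in>G. F x y) \<in> quasi_dists_with_margins FX FY"
proof -
  have Q: "\<And>F. F \<in> G \<Longrightarrow> biv_quasi_dist F \<and> has_margins F FX FY"
    using sub unfolding quasi_dists_with_margins_def by blast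
  have bd: "\<And>x y. bdd_above ((\<lambda>F. F x y) ` G)"
    by (rule bdd_aboveI[where M=1]) (use Q in \<open>auto simp: biv_quasi_dist_def\<close>)
  have lo: "\<And>F x y. F \<in> G \<Longrightarrow> F x y \<le> (SUP F\<in>G. F x y)"
    by (rule cSUP_upper[OF _ bd])
  have gr: "\<And>m x y. (\<And>F. F \<in> G \<Longrightarrow> F x y \<le> m) \<Longrightarrow> (SUP F\<in>G. F x y) \<le> m"
    by (rule cSUP_least[OF ne]) auto
  have const: "\<And>x y c. (\<And>F. F \<in> G \<Longrightarrow> F x y = c) \<Longrightarrow> (SUP F\<in>G. F x y) = c"
  proof -
    fix x y c assume h: "\<And>F. F \<in> G \<Longrightarrow> F x y = (c::real)"
    from ne obtain F0 where "F0 \<in> G" by blast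
    show "(SUP F\<in>G. F x y) = c"
      using lo[OF \<open>F0 \<in> G\<close>, of x y] h[OF \<open>F0 \<in> G\<close>] gr[of x y c] h by force
  qed
  let ?G = "\<lambda>x y. SUP F\<in>G. F x y"
  have mx: "\<And>x. ?G x \<infinity> = FX x" using const Q by (auto simp: has_margins_def)
  have my: "\<And>y. ?G \<infinity> y = FY y" using const Q by (auto simp: has_margins_def)
  have z1: "\<And>x. ?G x (-\<infinity>) = 0" using const Q by (auto simp: biv_quasi_dist_def)
  have z2: "\<And>y. ?G (-\<infinity>) y = 0" using const Q by (auto simp: biv_quasi_dist_def)
  have one: "?G \<infinity> \<infinity> = 1" using const Q by (auto simp: biv_quasi_dist_def)
  have b1: "\<And>x y. ?G x y \<le> 1" using gr Q by (auto simp: biv_quasi_dist_def)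
  have b0: "\<And>x y. 0 \<le> ?G x y"
  proof -
    fix x y
    from ne obtain F0 where "F0 \<in> G" by blast
    have b: "0 \<le> F0 x y" using Q[OF \<open>F0 \<in> G\<close>] by (simp add: biv_quasi_dist_def)
    show "0 \<le> ?G x y" by (rule order_trans[OF b lo[OF \<open>F0 \<in> G\<close>]])
  qed
  have vol: "\<And>F x1 x2 y1 y2. F \<in> G \<Longrightarrow> x1 \<le> x2 \<Longrightarrow> y1 \<le> y2 \<Longrightarrow> meets_boundary x1 x2 y1 y2
     \<Longrightarrow> volume2 F x1 x2 y1 y2 \<ge> 0"
    using Q by (auto simp: biv_quasi_dist_def)
  have V: "volume2 ?G x1 x2 y1 y2 \<ge> 0" if h: "x1 \<le> x2" "y1 \<le> y2" "meets_boundary x1 x2 y1 y2"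
    for x1 x2 y1 y2
  proof -
    consider "x1 = -\<infinity>" | "x2 = \<infinity>" | "y1 = -\<infinity>" | "y2 = \<infinity>"
      using h(3) unfolding meets_boundary_def by blast
    then show ?thesis
    proof cases
      case 1
      have "\<And>F. F \<in> G \<Longrightarrow> F x2 y1 \<le> F x2 y2"
      proof -
        fix F assume "F \<in> G"
        from vol[OF this h] Q[OF this] 1 show "F x2 y1 \<le> F x2 y2"
          by (simp add: volume2_def biv_quasi_dist_def)
      qed
      note hF = this
      have "?G x2 y1 \<le> ?G x2 y2"
      proof (rule gr)
        fix F assume FG: "F \<in> G"
        show "F x2 y1 \<le> ?G x2 y2" by (rule order_trans[OF hF[OF FG] lo[OF FG]])
      qed
      then show ?thesis using 1 z2 by (simp add: volume2_def)
    next
      case 3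
      have "\<And>F. F \<in> G \<Longrightarrow> F x1 y2 \<le> F x2 y2"
      proof -
        fix F assume "F \<in> G"
        from vol[OF this h] Q[OF this] 3 show "F x1 y2 \<le> F x2 y2"
          by (simp add: volume2_def biv_quasi_dist_def)
      qed
      note hF = this
      have "?G x1 y2 \<le> ?G x2 y2"
      proof (rule gr)
        fix F assume FG: "F \<in> G"
        show "F x1 y2 \<le> ?G x2 y2" by (rule order_trans[OF hF[OF FG] lo[OF FG]])
      qed
      then show ?thesis using 3 z1 by (simp add: volume2_def)
    next
      case 2
      have "\<And>F. F \<in> G \<Longrightarrow> F x1 y2 \<le> F x1 y1 + (FY y2 - FY y1)"
      proof -
        fix F assume "F \<in> G"
        from vol[OF this h] Q[OF this] 2 show "F x1 y2 \<le> F x1 y1 + (FY y2 - FY y1)"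
          by (simp add: volume2_def has_margins_def)
      qed
      note hF = this
      have "?G x1 y2 \<le> ?G x1 y1 + (FY y2 - FY y1)"
      proof (rule gr)
        fix F assume "F \<in> G"
        then show "F x1 y2 \<le> ?G x1 y1 + (FY y2 - FY y1)" using lo[OF \<open>F \<in> G\<close>, of x1 y1] hF[OF \<open>F \<in> G\<close>] by linarith
      qed
      then show ?thesis using 2 my by (simp add: volume2_def)
    next
      case 4
      have "\<And>F. F \<in> G \<Longrightarrow> F x2 y1 \<le> F x1 y1 + (FX x2 - FX x1)"
      proof -
        fix F assume "F \<in> G"
        from vol[OF this h] Q[OF this] 4 show "F x2 y1 \<le> F x1 y1 + (FX x2 - FX x1)"
          by (simp add: volume2_def has_margins_def)
      qed
      note hF = this
      have "?G x2 y1 \<le> ?G x1 y1 + (FX x2 - FX x1)"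
      proof (rule gr)
        fix F assume "F \<in> G"
        then show "F x2 y1 \<le> ?G x1 y1 + (FX x2 - FX x1)" using lo[OF \<open>F \<in> G\<close>, of x1 y1] hF[OF \<open>F \<in> G\<close>] by linarith
      qed
      then show ?thesis using 4 mx by (simp add: volume2_def)
    qed
  qed
  show ?thesis
    unfolding quasi_dists_with_margins_def biv_quasi_dist_def has_margins_def
    using b0 b1 z1 z2 one mx my V one[unfolded my] by auto
qed

theorem lemma13:
  fixes FX FY :: "ereal \<Rightarrow> real"
  assumes "univ_dist FX" and "univ_dist FY"
  shows "(\<forall>\<G>. \<G> \<noteq> {} \<and> \<G> \<subseteq> quasi_dists_with_margins FX FY \<longrightarrow>
            (\<lambda>x y. INF F\<in>\<G>. F x y) \<in> quasi_dists_with_margins FX FY \<and>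
            (\<lambda>x y. SUP F\<in>\<G>. F x y) \<in> quasi_dists_with_margins FX FY) \<and>
         (\<forall>\<G>. \<G> \<noteq> {} \<and> (\<forall>F\<in>\<G>. biv_dist F \<and> has_margins F FX FY) \<longrightarrow>
            biv_quasi_dist (\<lambda>x y. INF F\<in>\<G>. F x y) \<and>
            has_margins (\<lambda>x y. INF F\<in>\<G>. F x y) FX FY \<and>
            biv_quasi_dist (\<lambda>x y. SUP F\<in>\<G>. F x y) \<and>
            has_margins (\<lambda>x y. SUP F\<in>\<G>. F x y) FX FY)"
proof (intro conjI allI impI)
  fix G :: "(ereal \<Rightarrow> ereal \<Rightarrow> real) set"
  assume h: "G \<noteq> {} \<and> G \<subseteq> quasi_dists_with_margins FX FY"
  show "(\<lambda>x y. INF F\<in>G. F x y) \<in> quasi_dists_with_margins FX FY" using inf_closed h by blast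
  show "(\<lambda>x y. SUP F\<in>G. F x y) \<in> quasi_dists_with_margins FX FY" using sup_closed h by blast
next
  fix G :: "(ereal \<Rightarrow> ereal \<Rightarrow> real) set"
  assume h: "G \<noteq> {} \<and> (\<forall>F\<in>G. biv_dist F \<and> has_margins F FX FY)"
  then have s: "G \<subseteq> quasi_dists_with_margins FX FY"
    by (auto simp: quasi_dists_with_margins_def biv_dist_def)
  have i: "(\<lambda>x y. INF F\<in>G. F x y) \<in> quasi_dists_with_margins FX FY" using inf_closed h s by blast
  have u: "(\<lambda>x y. SUP F\<in>G. F x y) \<in> quasi_dists_with_margins FX FY" using sup_closed h s by blast
  show "biv_quasi_dist (\<lambda>x y. INF F\<in>G. F x y)" using i by (simp add: quasi_dists_with_margins_def)
  show "has_margins (\<lambda>x y. INF F\<in>G. F x y) FX FY" using i by (simp add: quasi_dists_with_margins_def)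
  show "biv_quasi_dist (\<lambda>x y. SUP F\<in>G. F x y)" using u by (simp add: quasi_dists_with_margins_def)
  show "has_margins (\<lambda>x y. SUP F\<in>G. F x y) FX FY" using u by (simp add: quasi_dists_with_margins_def)
qed

end
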